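(* Let $\mathbf V$ be a monoid variety satisfying the identities $xyx\approx xyx^2$, $xyx\approx x^2yx$ and $(xy)^2\approx (yx)^2$. If $M_\gamma(x^+tyy^+x^+)\notin\mathbf V$, then $\mathbf V$ satisfies the identity $xty^2x\approx xtxy^2x$.
   Context: Words are elements of the free monoid $\mathfrak X^\ast$ over a countably infinite alphabet $\mathfrak X$. A letter is simple in a word if it occurs exactly once. The congruence $\gamma$ on $\mathfrak X^\ast$: $\mathbf u\mathrel\gamma\mathbf v$ iff $\mathbf u,\mathbf v$ have the same set of simple letters and $\mathbf u$ is obtained from $\mathbf v$ by changing the individual exponents of letters (i.e. $\mathbf u=x_1^{e_1}\cdots x_r^{e_r}$, $\mathbf v=x_1^{f_1}\cdots x_r^{f_r}$ with $e_i,f_i\ge1$). For $\gamma$-classes write $\mathtt v\le\mathtt u$ if $\mathtt u=\mathtt p\mathtt v\mathtt s$ for some $\gamma$-classes $\mathtt p,\mathtt s$. For a set $\mathtt W$ of $\gamma$-classes, $M_\gamma(\mathtt W)$ is the Rees quotient of $\mathfrak X^\ast/\gamma$ by the ideal of $\gamma$-classes not $\le$ any member of $\mathtt W$. With $x^+=\{x^k\mid k\ge1\}$, $x^+tyy^+x^+$ denotes the $\gamma$-class of $xty^2x$, and $M_\gamma(x^+tyy^+x^+)=M_\gamma(\{x^+tyy^+x^+\})$. *)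

theory Defs
  imports "HOL-Algebra.Group"
begin

type_synonym word = "nat list"

definition simple_letters :: "word \<Rightarrow> nat set" where
  "simple_letters w = {x. count_list w x = 1}"

definition gamma_rel :: "word \<Rightarrow> word \<Rightarrow> bool" where
  "gamma_rel u v \<longleftrightarrow> simple_letters u = simple_letters v \<and>
     (\<exists>xs es fs. length es = length xs \<and> length fs = length xs \<and>
        (\<forall>e\<in>set es. e \<ge> 1) \<and> (\<forall>f\<in>set fs. f \<ge> 1) \<and>
        u = concat (map2 (\<lambda>e x. replicate e x) es xs) \<and>
        v = concat (map2 (\<lambda>f x. replicate f x) fs xs))"

definition gclass :: "word \<Rightarrow> word set" where
  "gclass w = {v. gamma_rel v w}"

definition gclasses :: "word set set" where
  "gclasses = range gclass"

text \<open>Product of gamma-classes (gamma is a congruence).\<close>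
definition cmult :: "word set \<Rightarrow> word set \<Rightarrow> word set" where
  "cmult A B = gclass ((SOME a. a \<in> A) @ (SOME b. b \<in> B))"

definition cle :: "word set \<Rightarrow> word set \<Rightarrow> bool" where
  "cle V U \<longleftrightarrow> (\<exists>p\<in>gclasses. \<exists>s\<in>gclasses. U = cmult (cmult p V) s)"

text \<open>Rees quotient M_gamma(W); the zero is None, a class c is Some c.\<close>
definition M_gamma :: "word set set \<Rightarrow> word set option monoid" where
  "M_gamma W = \<lparr> carrier = insert None (Some ` {c \<in> gclasses. \<exists>w\<in>W. cle c w}),
     mult = (\<lambda>a b. case (a, b) of
                (Some c, Some d) \<Rightarrow>
                   (if \<exists>w\<in>W. cle (cmult c d) w then Some (cmult c d) else None)
              | _ \<Rightarrow> None),
     one = Some (gclass []) \<rparr>"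

definition eval_word :: "('a, 'b) monoid_scheme \<Rightarrow> (nat \<Rightarrow> 'a) \<Rightarrow> word \<Rightarrow> 'a" where
  "eval_word M \<phi> w = foldr (\<lambda>x acc. \<phi> x \<otimes>\<^bsub>M\<^esub> acc) w \<one>\<^bsub>M\<^esub>"

definition sat_id :: "('a, 'b) monoid_scheme \<Rightarrow> word \<times> word \<Rightarrow> bool" where
  "sat_id M uv \<longleftrightarrow> (\<forall>\<phi>. range \<phi> \<subseteq> carrier M \<longrightarrow>
                        eval_word M \<phi> (fst uv) = eval_word M \<phi> (snd uv))"

definition subst_word :: "(nat \<Rightarrow> word) \<Rightarrow> word \<Rightarrow> word" where
  "subst_word \<sigma> w = concat (map \<sigma> w)"

text \<open>Monoid varieties correspond (Birkhoff) to equational theories, i.e. fully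
  invariant congruences on the free monoid of countably infinite rank.\<close>
definition equational_theory :: "(word \<times> word) set \<Rightarrow> bool" where
  "equational_theory T \<longleftrightarrow> equiv UNIV T \<and>
     (\<forall>u v p s. (u, v) \<in> T \<longrightarrow> (p @ u @ s, p @ v @ s) \<in> T) \<and>
     (\<forall>u v \<sigma>. (u, v) \<in> T \<longrightarrow> (subst_word \<sigma> u, subst_word \<sigma> v) \<in> T)"

definition in_variety :: "('a, 'b) monoid_scheme \<Rightarrow> (word \<times> word) set \<Rightarrow> bool" where
  "in_variety M T \<longleftrightarrow> (\<forall>uv\<in>T. sat_id M uv)"

end

theory Submission
  imports Defs
begin


lemma subst_word_simps[simp]:
  "subst_word \<sigma> [] = []"
  "subst_word \<sigma> (x # xs) = \<sigma> x @ subst_word \<sigma> xs"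
  "subst_word \<sigma> (xs @ ys) = subst_word \<sigma> xs @ subst_word \<sigma> ys"
  by (simp_all add: subst_word_def)

lemma subst_word_replicate[simp]: "subst_word \<sigma> (replicate n x) = concat (replicate n (\<sigma> x))"
  by (induct n) auto

locale eqth =
  fixes T :: "(word \<times> word) set"
  assumes ET: "equational_theory T"
    and S1': "([0,1,0], [0,1,0,0]) \<in> T"
    and S2': "([0,1,0], [0,0,1,0]) \<in> T"
    and S3': "([0,1,0,1], [1,0,1,0]) \<in> T"
begin

abbreviation eqT (infix "\<approx>" 50) where "u \<approx> v \<equiv> (u, v) \<in> T"

lemma rfl[simp]: "u \<approx> u"
  using ET unfolding equational_theory_def equiv_def refl_on_def by auto

lemma sym: "u \<approx> v \<Longrightarrow> v \<approx> u"
  using ET unfolding equational_theory_def equiv_def sym_def by blast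

lemma trn: "u \<approx> v \<Longrightarrow> v \<approx> w \<Longrightarrow> u \<approx> w"
  using ET unfolding equational_theory_def equiv_def trans_def by blast

lemma ctx: "u \<approx> v \<Longrightarrow> p @ u @ s \<approx> p @ v @ s"
  using ET unfolding equational_theory_def by blast

lemma ctxL: "u \<approx> v \<Longrightarrow> p @ u \<approx> p @ v"
  using ctx[of u v p "[]"] by simp

lemma ctxR: "u \<approx> v \<Longrightarrow> u @ s \<approx> v @ s"
  using ctx[of u v "[]" s] by simp

lemma sub: "u \<approx> v \<Longrightarrow> subst_word \<sigma> u \<approx> subst_word \<sigma> v"
  using ET unfolding equational_theory_def by blast

definition sg2 :: "word \<Rightarrow> word \<Rightarrow> nat \<Rightarrow> word" where
  "sg2 x y = (\<lambda>c. if c = 0 then x else if c = 1 then y else [])"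

lemma S1: "x @ y @ x \<approx> x @ y @ x @ x"
  using sub[OF S1', of "sg2 x y"] by (simp add: sg2_def)
lemma S2: "x @ y @ x \<approx> x @ x @ y @ x"
  using sub[OF S2', of "sg2 x y"] by (simp add: sg2_def)
lemma S3: "x @ y @ x @ y \<approx> y @ x @ y @ x"
  using sub[OF S3', of "sg2 x y"] by (simp add: sg2_def)

lemma E1step:
  assumes "z \<in> set p \<or> z \<in> set s"
  shows "p @ replicate (Suc (Suc n)) z @ s \<approx> p @ replicate (Suc n) z @ s"
proof (cases "z \<in> set p")
  case True
  then obtain p1 p2 where p: "p = p1 @ z # p2" by (meson split_list)
  have "[z] @ (p2 @ replicate n z) @ [z] \<approx> [z] @ (p2 @ replicate n z) @ [z] @ [z]" by (rule S1)
  from ctx[OF this, of p1 s] show ?thesis using p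
    by (simp add: replicate_app_Cons_same sym)
next
  case False
  with assms have "z \<in> set s" by auto
  then obtain s1 s2 where s: "s = s1 @ z # s2" by (meson split_list)
  have "[z] @ (replicate n z @ s1) @ [z] \<approx> [z] @ [z] @ (replicate n z @ s1) @ [z]" by (rule S2)
  from ctx[OF this, of p s2] show ?thesis using s
    by (simp add: sym)
qed

lemma E1:
  assumes "e \<ge> 1" "z \<in> set p \<or> z \<in> set s"
  shows "p @ replicate e z @ s \<approx> p @ [z] @ s"
proof -
  obtain n where e: "e = Suc n" using assms(1) by (cases e) auto
  have "p @ replicate (Suc n) z @ s \<approx> p @ [z] @ s"
  proof (induct n)
    case 0 then show ?case by simp
  next
    case (Suc n) then show ?case using E1step[OF assms(2), of n] trn by blast
  qed
  then show ?thesis using e by simp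
qed

lemma E2:
  assumes "e \<ge> 2"
  shows "p @ replicate e z @ s \<approx> p @ [z,z] @ s"
proof -
  obtain n where e: "e = Suc n" "n \<ge> 1" using assms by (cases e) auto
  have "(p @ [z]) @ replicate n z @ s \<approx> (p @ [z]) @ [z] @ s" by (rule E1) (use e in auto)
  then show ?thesis using e by simp
qed

end


lemma count_list_replicate[simp]: "count_list (replicate n x) y = (if x = y then n else 0)"
  by (induct n) auto

lemma concat_rep_single[simp]: "concat (replicate m [x]) = replicate m x"
  by (induct m) auto

context eqth begin

abbreviation tgt where "tgt \<equiv> [0,1,2,2,0] \<approx> [0,1,0,2,2,0]"

lemma inst: "u \<approx> v \<Longrightarrow> subst_word (sg2 x y) u \<approx> subst_word (sg2 x y) v"
  by (rule sub)

lemma I4: assumes h: "[0,1,0] \<approx> [0,0,1]" shows tgt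
proof -
  have h1: "[0,1,2,2,0] \<approx> [0,0,1,2,2]" using inst[OF h, of "[0]" "[1,2,2]"] by (simp add: sg2_def)
  have h2: "[0,1,0,2,2,0] \<approx> [0,0,1,0,2,2]" using inst[OF h, of "[0]" "[1,0,2,2]"] by (simp add: sg2_def)
  have h3: "[0,0,1,0,2,2] \<approx> [0,0,0,1,2,2]" using ctx[OF h, of "[0]" "[2,2]"] by simp
  have h4: "[0,0,0,1,2,2] \<approx> [0,0,1,2,2]" using E2[of 3 "[]" 0 "[1,2,2]"] by (simp add: numeral_eq_Suc)
  show ?thesis by (meson h1 h2 h3 h4 sym trn)
qed

lemma I3: assumes h: "[0,1,0] \<approx> [1,0,0]" shows tgt
proof -
  have h1: "[0,1,2,2,0] \<approx> [1,2,2,0,0]" using inst[OF h, of "[0]" "[1,2,2]"] by (simp add: sg2_def)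
  have h2: "[0,1,0,2,2,0] \<approx> [1,0,2,2,0,0]" using inst[OF h, of "[0]" "[1,0,2,2]"] by (simp add: sg2_def)
  have "[0,2,2,0] \<approx> [2,2,0,0]" using inst[OF h, of "[0]" "[2,2]"] by (simp add: sg2_def)
  then have h3: "[1,0,2,2,0,0] \<approx> [1,2,2,0,0,0]" using ctx[of _ _ "[1]" "[0]"] by fastforce
  have h4: "[1,2,2,0,0,0] \<approx> [1,2,2,0,0]" using E2[of 3 "[1,2,2]" 0 "[]"] by (simp add: numeral_eq_Suc)
  show ?thesis by (meson h1 h2 h3 h4 sym trn)
qed

lemma I2: assumes h: "[0,0,1] \<approx> [1,0,0]" shows tgt
proof -
  have h1: "[0,1,0,2,2,0] \<approx> [0,1,0,0,2,2,0]" using E1[of 2 0 "[0,1]" "[2,2,0]"] by (simp add: numeral_eq_Suc sym)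
  have h2: "[0,1,0,0,2,2,0] \<approx> [0,0,0,1,2,2,0]" using ctx[OF sym[OF h], of "[0]" "[2,2,0]"] by simp
  have h3: "[0,0,0,1,2,2,0] \<approx> [0,0,1,2,2,0]" using E2[of 3 "[]" 0 "[1,2,2,0]"] by (simp add: numeral_eq_Suc)
  have h4: "[0,0,1,2,2,0] \<approx> [0,1,2,2,0]" using E1[of 2 0 "[]" "[1,2,2,0]"] by (simp add: numeral_eq_Suc)
  show ?thesis by (meson h1 h2 h3 h4 sym trn)
qed

lemma I1: assumes h: "[0,1] \<approx> [1,0]" shows tgt
proof -
  have "[0,0,1] \<approx> [0,1,0]" using ctx[OF h, of "[0]" "[]"] by simp
  moreover have "[0,1,0] \<approx> [1,0,0]" using ctx[OF h, of "[]" "[0]"] by simp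
  ultimately show ?thesis using I2 trn by blast
qed

lemma idem: assumes h: "[0] \<approx> [0,0]" shows tgt
proof -
  have h1: "[0,1] \<approx> [0,1,0,1]" using inst[OF h, of "[0,1]" "[]"] by (simp add: sg2_def)
  have h2: "[1,0] \<approx> [1,0,1,0]" using inst[OF h, of "[1,0]" "[]"] by (simp add: sg2_def)
  show ?thesis using I1 h1 h2 S3' by (meson sym trn)
qed

lemma allnil: assumes h: "[0] \<approx> []" shows "w \<approx> []"
proof (induct w)
  case Nil then show ?case by simp
next
  case (Cons c w)
  have "subst_word (\<lambda>_. [c]) [0] \<approx> subst_word (\<lambda>_. [c]) []" using sub[OF h] .
  then have "[c] \<approx> []" by simp
  then have "[c] @ w \<approx> [] @ w" by (rule ctxR)
  then show ?case using Cons trn by simp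
qed

lemma triv: assumes h: "[0] \<approx> []" shows tgt
  using allnil[OF h] sym trn by blast

lemma Mult0: assumes h: "replicate m z \<approx> replicate n z" and "min m 2 \<noteq> min n 2" shows tgt
proof -
  have h': "replicate m 0 \<approx> replicate n 0" using sub[OF h, of "\<lambda>_. [0]"] by simp
  have P: "replicate k 0 \<approx> [0,0]" if "k \<ge> 2" for k using E2[OF that, of "[]" 0 "[]"] by simp
  have Z: tgt if "[] \<approx> replicate k 0" "k \<ge> 1" for k
  proof (cases "k = 1")
    case True then show ?thesis using that triv sym by simp
  next
    case False
    then have "[] \<approx> [0,0]" using that P trn by auto
    then have "[0] @ [] \<approx> [0] @ [0,0]" by (rule ctxL)
    then have "[0] \<approx> [0,0,0]" by simp
    moreover have "[0,0,0] \<approx> [0,0]" using P[of 3] by (simp add: numeral_eq_Suc)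
    ultimately have "[0] \<approx> []" using \<open>[] \<approx> [0,0]\<close> sym trn by blast
    then show ?thesis by (rule triv)
  qed
  have O: tgt if "[0] \<approx> replicate k 0" "k \<ge> 2" for k
    using that P idem trn by blast
  have key: tgt if "replicate m' 0 \<approx> replicate n' 0" "min m' 2 < min n' 2" for m' n'
  proof -
    have "m' = 0 \<and> n' \<ge> 1 \<or> m' = 1 \<and> n' \<ge> 2" using that(2) by (auto simp: min_def split: if_splits)
    then show ?thesis
    proof
      assume "m' = 0 \<and> n' \<ge> 1" then show ?thesis using Z[of n'] that(1) by simp
    next
      assume "m' = 1 \<and> n' \<ge> 2" then show ?thesis using O[of n'] that(1) by simp
    qed
  qed
  show ?thesis
  proof (cases "min m 2 < min n 2")
    case True then show ?thesis using key h' by blast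
  next
    case False then have "min n 2 < min m 2" using assms(2) by linarith
    then show ?thesis using key sym[OF h'] by blast
  qed
qed

definition nf :: "nat \<Rightarrow> nat \<Rightarrow> word" where
  "nf a b = (if a = 0 then 1 # replicate (min b 2) 0 else if b = 0 then replicate (min a 2) 0 @ [1] else [0,1,0])"

lemma nf: "replicate a 0 @ 1 # replicate b 0 \<approx> nf a b"
proof -
  have P: "p @ replicate k 0 @ s \<approx> p @ replicate (min k 2) 0 @ s" for k p s
  proof (cases "k \<ge> 2")
    case True then show ?thesis using E2[OF True, of p 0 s] by (simp add: min_def numeral_eq_Suc)
  qed (simp add: min_def)
  show ?thesis
  proof (cases "a = 0")
    case True then show ?thesis using P[of "[1]" b "[]"] by (simp add: nf_def)
  next
    case a: False
    show ?thesis
    proof (cases "b = 0")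
      case True then show ?thesis using a P[of "[]" a "[1]"] by (simp add: nf_def)
    next
      case False
      have 1: "replicate a 0 @ 1 # replicate b 0 \<approx> [0] @ 1 # replicate b 0"
        using E1[of a 0 "[]" "1 # replicate b 0"] a False by simp
      have 2: "[0,1] @ replicate b 0 @ [] \<approx> [0,1] @ [0] @ []"
        using E1[of b 0 "[0,1]" "[]"] False by simp
      show ?thesis using 1 2 a False trn by (simp add: nf_def)
    qed
  qed
qed

lemma nf_hd: "hd (nf a b) = 1 \<longleftrightarrow> a = 0"
  by (auto simp: nf_def hd_append min_def)

lemma nf_last: "last (nf a b) = 1 \<longleftrightarrow> b = 0"
  by (auto simp: nf_def last_append min_def)

lemma nf_count: "count_list (nf a b) 0 = min (a+b) 2"
  by (auto simp: nf_def min_def)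

lemma nf_mem: "nf a b \<in> {[1],[1,0],[1,0,0],[0,1],[0,0,1],[0,1,0]}"
proof -
  have "a = 0 \<or> a = 1 \<or> a \<ge> 2" "b = 0 \<or> b = 1 \<or> b \<ge> 2" by auto
  then show ?thesis by (elim disjE) (auto simp: nf_def min_def numeral_eq_Suc)
qed

lemma fin: assumes "u \<in> {[1],[1,0],[1,0,0],[0,1],[0,0,1],[0,1,0]}" "v \<in> {[1],[1,0],[1,0,0],[0,1],[0,0,1],[0,1,0]}"
  "u \<noteq> v" "count_list u 0 = count_list v 0" "u \<approx> v" shows tgt
proof -
  note J = I1[unfolded One_nat_def] I2[unfolded One_nat_def] I3[unfolded One_nat_def] I4[unfolded One_nat_def]
  note K = J[OF sym]
  show ?thesis
  using assms(1,2)
  apply (simp only: insert_iff empty_iff)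
  apply (elim disjE)
  using assms(3-5) by (simp_all add: J K)
qed

lemma L2: assumes h: "replicate a 0 @ 1 # replicate b 0 \<approx> replicate c 0 @ 1 # replicate d 0"
  and ty: "min (a+b) 2 = min (c+d) 2" and pat: "\<not> ((a=0 \<longleftrightarrow> c=0) \<and> (b=0 \<longleftrightarrow> d=0))"
  shows tgt
proof -
  have H: "nf a b \<approx> nf c d" using h nf sym trn by meson
  have "nf a b \<noteq> nf c d" using pat nf_hd nf_last by metis
  then show ?thesis using fin[OF nf_mem nf_mem _ _ H] nf_count ty by simp
qed

end


definition isW :: "word \<Rightarrow> bool" where
  "isW w \<longleftrightarrow> (\<exists>i j k. i \<ge> 1 \<and> j \<ge> 2 \<and> k \<ge> 1 \<and> w = replicate i 0 @ 1 # replicate j 2 @ replicate k 0)"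

lemma proj1: "subst_word (\<lambda>c. if c = z then [z'] else []) xs = replicate (count_list xs z) z'"
  by (induct xs) (auto simp: replicate_add[symmetric])

lemma proj2: "1 \<notin> set xs \<Longrightarrow> subst_word (\<lambda>c. if c = 1 then [1] else if c = z then [0] else []) xs = replicate (count_list xs z) 0"
  by (induct xs) (auto simp: replicate_add[symmetric])

lemma substt: "1 \<notin> set xs \<Longrightarrow> subst_word (\<lambda>c. if c = 1 then [1,0] else [c]) xs = xs"
  by (induct xs) auto

lemma splitRun: "\<exists>n ys. xs = replicate n z @ ys \<and> (ys = [] \<or> hd ys \<noteq> z)"
proof (induct xs)
  case Nil then show ?case by auto
next
  case (Cons x xs)
  then obtain n ys where "xs = replicate n z @ ys" "ys = [] \<or> hd ys \<noteq> z" by blast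
  then show ?case
    by (cases "x = z") (rule exI[of _ "Suc n"], force, rule exI[of _ 0], force)
qed

context eqth begin

lemma WN: assumes "isW w" shows "w \<approx> [0,1,2,2,0]"
proof -
  obtain i j k where ijk: "i \<ge> 1" "j \<ge> 2" "k \<ge> 1" "w = replicate i 0 @ 1 # replicate j 2 @ replicate k 0"
    using assms isW_def by auto
  have 1: "w \<approx> [0,1] @ replicate j 2 @ replicate k 0"
    using E1[of i 0 "[]" "1 # replicate j 2 @ replicate k 0"] ijk by simp
  have 2: "[0,1] @ replicate j 2 @ replicate k 0 \<approx> [0,1,2,2] @ replicate k 0"
    using E2[of j "[0,1]" 2 "replicate k 0"] ijk by simp
  have 3: "[0,1,2,2] @ replicate k 0 \<approx> [0,1,2,2,0]"
    using E1[of k 0 "[0,1,2,2]" "[]"] ijk by simp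
  show ?thesis using trn[OF trn[OF 1 2] 3] .
qed

lemma StartX: assumes H: "[0,1,2,2,0] \<approx> A @ 1 # 0 # B'" and A: "0 \<in> set A" "1 \<notin> set A" and B: "1 \<notin> set B'"
  shows tgt
proof -
  let ?s = "\<lambda>c::nat. if c = 1 then [1,0] else [c]"
  have "subst_word ?s [0,1,2,2,0] \<approx> subst_word ?s (A @ 1 # 0 # B')" using sub[OF H] .
  then have h1: "[0,1,0,2,2,0] \<approx> (A @ [1]) @ replicate 2 0 @ B'" using substt[OF A(2)] substt[OF B] by (simp add: numeral_eq_Suc)
  have h2: "(A @ [1]) @ replicate 2 0 @ B' \<approx> (A @ [1]) @ [0] @ B'" using E1[of 2 0 "A @ [1]" B'] A(1) by simp
  have h3: "(A @ [1]) @ [0] @ B' \<approx> [0,1,2,2,0]" using sym[OF H] by simp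
  show ?thesis using sym[OF trn[OF trn[OF h1 h2] h3]] .
qed

lemma MainL: assumes H: "[0,1,2,2,0] \<approx> w" and nW: "\<not> isW w" shows tgt
proof (rule ccontr)
  assume nt: "\<not> tgt"
  have cnt: "min (count_list [0,1,2,2,0] z) 2 = min (count_list w z) 2" for z
  proof (rule ccontr)
    assume "\<not> ?thesis"
    moreover have "replicate (count_list [0,1,2,2,0] z) z \<approx> replicate (count_list w z) z"
      using sub[OF H, of "\<lambda>c. if c = z then [z] else []"] unfolding proj1 .
    ultimately show False using Mult0 nt by blast
  qed
  have c1: "count_list w 1 = 1" using cnt[of 1] by (auto simp: min_def split: if_splits)
  have c0: "count_list w 0 \<ge> 2" using cnt[of 0] by (auto simp: min_def split: if_splits)
  have c2: "count_list w 2 \<ge> 2" using cnt[of 2] by (auto simp: min_def split: if_splits)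
  have cz: "z \<in> set w \<Longrightarrow> z = 0 \<or> z = 1 \<or> z = 2" for z
    using cnt[of z] by (auto simp: min_def count_list_0_iff split: if_splits)
  obtain A B where w: "w = A @ 1 # B" "1 \<notin> set A" "count_list B 1 = 0"
    using count_list_Suc_split_first[of w 1 0] c1 by auto
  have B1: "1 \<notin> set B" using w(3) count_list_0_iff by metis
  let ?p = "\<lambda>z c. if c = 1 then [1] else if c = z then [0::nat] else []"
  have pr: "replicate (count_list [0] z) 0 @ [1] @ replicate (count_list [2,2,0] z) 0 \<approx>
            replicate (count_list A z) 0 @ [1] @ replicate (count_list B z) 0" if "z \<noteq> 1" for z
  proof -
    have q0: "subst_word (?p z) [0] = replicate (count_list [0] z) 0" by (rule proj2) simp
    have q1: "subst_word (?p z) [2,2,0] = replicate (count_list [2,2,0] z) 0" by (rule proj2) simp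
    have s1: "subst_word (?p z) [1] = [1]" by simp
    have eq1: "[0,1,2,2,0] = [0] @ [1] @ [2,2,0]" by simp
    have eq2: "w = A @ [1] @ B" using w(1) by simp
    have "subst_word (?p z) ([0] @ [1] @ [2,2,0]) \<approx> subst_word (?p z) (A @ [1] @ B)"
      using sub[OF H[unfolded eq1 eq2], of "?p z"] .
    then show ?thesis by (simp only: subst_word_simps(3) q0 q1 s1 proj2[OF w(2)] proj2[OF B1])
  qed
  have "2 \<notin> set A"
  proof
    assume "2 \<in> set A"
    then have "count_list A 2 \<noteq> 0" by (simp add: count_list_0_iff)
    moreover have "replicate 0 0 @ 1 # replicate 2 0 \<approx> replicate (count_list A 2) 0 @ 1 # replicate (count_list B 2) 0"
      using pr[of 2] by (simp add: numeral_eq_Suc)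
    ultimately show False using L2[of 0 2 "count_list A 2" "count_list B 2"] nt c2 w(1) by simp
  qed
  have "0 \<in> set A"
  proof (rule ccontr)
    assume "0 \<notin> set A"
    then have "count_list A 0 = 0" by (simp add: count_list_0_iff)
    moreover have "replicate 1 0 @ 1 # replicate 1 0 \<approx> replicate (count_list A 0) 0 @ 1 # replicate (count_list B 0) 0"
      using pr[of 0] by simp
    ultimately show False using L2[of 1 1 "count_list A 0" "count_list B 0"] nt c0 w(1) by simp
  qed
  have "0 \<in> set B"
  proof (rule ccontr)
    assume "0 \<notin> set B"
    then have "count_list B 0 = 0" by (simp add: count_list_0_iff)
    moreover have "replicate 1 0 @ 1 # replicate 1 0 \<approx> replicate (count_list A 0) 0 @ 1 # replicate (count_list B 0) 0"
      using pr[of 0] by simp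
    ultimately show False using L2[of 1 1 "count_list A 0" "count_list B 0"] nt c0 w(1) by simp
  qed
  have setA: "set A \<subseteq> {0}" using cz w(1,2) \<open>2 \<notin> set A\<close> by auto
  then have "A = replicate (length A) 0" by (intro replicate_eqI) auto
  then obtain m where A: "A = replicate m 0" by blast
  have setB: "set B \<subseteq> {0,2}" using cz w(1) B1 by auto
  have "2 \<in> set B"
  proof (rule ccontr)
    assume "2 \<notin> set B"
    then have "count_list w 2 = 0" using w(1) \<open>2 \<notin> set A\<close> by (simp add: count_list_0_iff)
    then show False using c2 by simp
  qed
  have SX: False if "B = 0 # B'" for B'
  proof -
    have "[0,1,2,2,0] \<approx> A @ 1 # 0 # B'" using H w(1) that by simp
    moreover have "1 \<notin> set B'" using B1 that by simp
    ultimately show False using StartX \<open>0 \<in> set A\<close> w(2) nt by blast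
  qed
  obtain b B2 where b: "B = replicate b 2 @ B2" "B2 = [] \<or> hd B2 \<noteq> 2" using splitRun[of B 2] by blast
  have "B2 \<noteq> []"
  proof
    assume "B2 = []"
    then have "set B \<subseteq> {2}" using b(1) by (simp add: set_replicate_conv_if)
    then show False using \<open>0 \<in> set B\<close> by auto
  qed
  then have "hd B2 \<in> set B" using b(1) by simp
  then have "hd B2 \<in> {0,2}" using setB by blast
  then have "hd B2 = 0" using b(2) \<open>B2 \<noteq> []\<close> by blast
  have "b \<ge> 1"
  proof (rule ccontr)
    assume "\<not> b \<ge> 1"
    then have "B = B2" using b by simp
    also have "B2 = 0 # tl B2" using \<open>B2 \<noteq> []\<close> \<open>hd B2 = 0\<close> by (metis list.collapse)
    finally show False using SX by blast
  qed
  obtain c R where c: "B2 = replicate c 0 @ R" "R = [] \<or> hd R \<noteq> 0" using splitRun[of B2 0] by blast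
  have "c \<ge> 1"
  proof (rule ccontr)
    assume "\<not> c \<ge> 1"
    then have "B2 = R" using c(1) by simp
    then show False using c(2) \<open>B2 \<noteq> []\<close> \<open>hd B2 = 0\<close> by blast
  qed
  have "m \<ge> 1" using A \<open>0 \<in> set A\<close> by (cases m) auto
  show False
  proof (cases R)
    case Nil
    have "count_list w 2 = b" using w(1) A b c Nil by simp
    then have "isW w" unfolding isW_def using w(1) A b c Nil \<open>m \<ge> 1\<close> \<open>c \<ge> 1\<close> c2
      by (intro exI[of _ m] exI[of _ b] exI[of _ c]) simp
    then show False using nW by simp
  next
    case (Cons r R')
    have "r \<in> set B" using b c Cons by auto
    then have "r = 2" using c Cons setB by auto
    have e1: "(A @ [1]) @ replicate b 2 @ (replicate c 0 @ 2 # R') \<approx> (A @ [1]) @ [2] @ (replicate c 0 @ 2 # R')"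
      using E1[of b 2 "A @ [1]" "replicate c 0 @ 2 # R'"] \<open>b \<ge> 1\<close> by simp
    have e2: "(A @ [1,2]) @ replicate c 0 @ (2 # R') \<approx> (A @ [1,2]) @ [0] @ (2 # R')"
      using E1[of c 0 "A @ [1,2]" "2 # R'"] \<open>c \<ge> 1\<close> \<open>0 \<in> set A\<close> by simp
    have e1': "w \<approx> (A @ [1,2]) @ replicate c 0 @ (2 # R')" using e1 by (simp add: w(1) b c Cons \<open>r = 2\<close>)
    have e2': "(A @ [1,2]) @ replicate c 0 @ (2 # R') \<approx> A @ [1,2,0,2] @ R'" using e2 by simp
    have ww1: "w \<approx> A @ [1,2,0,2] @ R'" using trn[OF e1' e2'] .
    obtain d R'' where d: "R' = replicate d 2 @ R''" "R'' = [] \<or> hd R'' \<noteq> 2" using splitRun[of R' 2] by blast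
    have setR': "set R' \<subseteq> {0,2}" using setB b c Cons by auto
    show False
    proof (cases R'')
      case Nil
      have f1: "(A @ [1,2,0]) @ replicate (Suc d) 2 @ [] \<approx> (A @ [1,2,0]) @ [2] @ []"
        using E1[of "Suc d" 2 "A @ [1,2,0]" "[]"] by simp
      have f2: "[] @ replicate m 0 @ [1,2,0,2] \<approx> [] @ [0] @ [1,2,0,2]"
        using E1[of m 0 "[]" "[1,2,0,2]"] \<open>m \<ge> 1\<close> by simp
      have f1': "A @ [1,2,0,2] @ R' \<approx> A @ [1,2,0,2]" using f1 by (simp add: d Nil)
      have f2': "A @ [1,2,0,2] \<approx> [0,1,2,0,2]" using f2 by (simp add: A)
      have "A @ [1,2,0,2] @ R' \<approx> [0,1,2,0,2]" using trn[OF f1' f2'] .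
      then have H2: "[0,1,2,2,0] \<approx> [0,1,2,0,2]" using trn[OF trn[OF H ww1]] by blast
      have h1: "[0,1,2,2,0,0] \<approx> [0,1,2,0,2,0]" using ctxR[OF H2, of "[0]"] by simp
      have h2: "[0,1,2,2,0,0] \<approx> [0,1,2,2,0]" using E1[of 2 0 "[0,1,2,2]" "[]"] by (simp add: numeral_eq_Suc)
      have h3: "[0,1,0,2,2,0] \<approx> [0,1,0,2,0,2]"
        using sub[OF H2, of "\<lambda>c. if c = 1 then [1,0] else [c]"] by simp
      have h4: "[0,1,0,2,0,2] \<approx> [0,1,2,0,2,0]" using ctxL[OF S3[of "[0]" "[2]"], of "[0,1]"] by simp
      have tgt using sym[OF trn[OF trn[OF trn[OF h3 h4] sym[OF h1]] h2]] .
      then show False using nt by simp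
    next
      case (Cons r2 R3)
      have "r2 \<in> set R'" using d Cons by auto
      then have "r2 = 0" using d Cons setR' by auto
      have g1: "(A @ [1,2,0]) @ replicate (Suc d) 2 @ (0 # R3) \<approx> (A @ [1,2,0]) @ [2] @ (0 # R3)"
        using E1[of "Suc d" 2 "A @ [1,2,0]" "0 # R3"] by simp
      have g2: "(A @ [1]) @ [2,0,2,0] @ R3 \<approx> (A @ [1]) @ [0,2,0,2] @ R3"
        using ctx[OF S3[of "[2]" "[0]"], of "A @ [1]" R3] by simp
      have g1': "A @ [1,2,0,2] @ R' \<approx> A @ [1,2,0,2,0] @ R3" using g1 by (simp add: d Cons \<open>r2 = 0\<close>)
      have g2': "A @ [1,2,0,2,0] @ R3 \<approx> A @ 1 # 0 # ([2,0,2] @ R3)" using g2 by simp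
      have "A @ [1,2,0,2] @ R' \<approx> A @ 1 # 0 # ([2,0,2] @ R3)" using trn[OF g1' g2'] .
      then have H3: "[0,1,2,2,0] \<approx> A @ 1 # 0 # ([2,0,2] @ R3)" using trn[OF trn[OF H ww1]] by blast
      have "1 \<notin> set R3" using setR' d Cons by auto
      then have tgt using StartX[OF H3] \<open>0 \<in> set A\<close> w(2) by simp
      then show False using nt by simp
    qed
  qed
qed

end


abbreviation blocks :: "nat list \<Rightarrow> word \<Rightarrow> word" where
  "blocks es xs \<equiv> concat (map2 (\<lambda>e x. replicate e x) es xs)"

lemma RA: "remdups_adj (replicate (Suc n) x @ r) = remdups_adj (x # r)"
  by (induct n) auto

lemma RCons_eq: "remdups_adj r = remdups_adj r' \<Longrightarrow> remdups_adj (x # r) = remdups_adj (x # r')"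
  by (simp add: remdups_adj_Cons)

lemma R1: "length es = length xs \<Longrightarrow> \<forall>e\<in>set es. e \<ge> 1 \<Longrightarrow> remdups_adj (blocks es xs) = remdups_adj xs"
proof (induct xs arbitrary: es)
  case Nil then show ?case by simp
next
  case (Cons x xs)
  then obtain e es' where es: "es = e # es'" by (cases es) auto
  then obtain n where n: "e = Suc n" using Cons.prems by (cases e) auto
  have IH: "remdups_adj (blocks es' xs) = remdups_adj xs" using Cons es by simp
  have "remdups_adj (blocks es (x # xs)) = remdups_adj (x # blocks es' xs)" using es n RA by simp
  also have "\<dots> = remdups_adj (x # xs)" using RCons_eq[OF IH] .
  finally show ?case .
qed

lemma R2: "\<exists>es. length es = length (remdups_adj u) \<and> (\<forall>e\<in>set es. e \<ge> 1) \<and> u = blocks es (remdups_adj u)"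
proof (induct u)
  case Nil then show ?case by simp
next
  case (Cons x u)
  then obtain es where es: "length es = length (remdups_adj u)" "\<forall>e\<in>set es. e \<ge> 1" "u = blocks es (remdups_adj u)" by blast
  show ?case
  proof (cases "remdups_adj u")
    case Nil
    then have "u = []" by simp
    then show ?thesis by (intro exI[of _ "[1]"]) simp
  next
    case (Cons y ys)
    show ?thesis
    proof (cases "x = y")
      case True
      obtain e es' where e: "es = e # es'" using es(1) Cons by (cases es) auto
      have r: "remdups_adj (x # u) = y # ys" using Cons True by (simp add: remdups_adj_Cons)
      have "x # u = blocks (Suc e # es') (y # ys)" using es(3) Cons e True by simp
      then show ?thesis using r es e Cons by (intro exI[of _ "Suc e # es'"]) auto
    next
      case False
      have r: "remdups_adj (x # u) = x # y # ys" using Cons False by (simp add: remdups_adj_Cons)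
      have "x # u = blocks (1 # es) (x # y # ys)" using es(3) Cons by simp
      then show ?thesis using r es Cons by (intro exI[of _ "1 # es"]) auto
    qed
  qed
qed

lemma GC: "gamma_rel u v \<longleftrightarrow> remdups_adj u = remdups_adj v \<and> simple_letters u = simple_letters v"
proof
  assume "gamma_rel u v"
  then obtain xs es fs where "length es = length xs" "length fs = length xs"
    "\<forall>e\<in>set es. e \<ge> 1" "\<forall>f\<in>set fs. f \<ge> 1" "u = blocks es xs" "v = blocks fs xs"
    "simple_letters u = simple_letters v"
    unfolding gamma_rel_def by blast
  then show "remdups_adj u = remdups_adj v \<and> simple_letters u = simple_letters v" using R1 by metis
next
  assume a: "remdups_adj u = remdups_adj v \<and> simple_letters u = simple_letters v"
  obtain es where es: "length es = length (remdups_adj u)" "\<forall>e\<in>set es. e \<ge> 1" "u = blocks es (remdups_adj u)" using R2 by blast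
  obtain fs where fs: "length fs = length (remdups_adj v)" "\<forall>e\<in>set fs. e \<ge> 1" "v = blocks fs (remdups_adj v)" using R2 by blast
  show "gamma_rel u v" unfolding gamma_rel_def
    using a es fs by (intro conjI exI[of _ "remdups_adj u"] exI[of _ es] exI[of _ fs]) auto
qed

lemma g_refl: "gamma_rel u u" by (simp add: GC)
lemma g_sym: "gamma_rel u v \<Longrightarrow> gamma_rel v u" by (simp add: GC)
lemma g_trans: "gamma_rel u v \<Longrightarrow> gamma_rel v w \<Longrightarrow> gamma_rel u w" by (simp add: GC)

lemma R_cons_ne: "w = [] \<or> hd w \<noteq> x \<Longrightarrow> remdups_adj (x # w) = x # remdups_adj w"
  by (cases w) auto

lemma rda_idem: "remdups_adj (remdups_adj b) = remdups_adj b"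
proof (induct b rule: remdups_adj.induct)
  case 1 show ?case by simp
next
  case (2 x) show ?case by simp
next
  case (3 x y xs)
  show ?case
  proof (cases "x = y")
    case True then show ?thesis using 3(1) by simp
  next
    case False
    have e: "remdups_adj (x # y # xs) = x # remdups_adj (y # xs)" using False by simp
    have "hd (remdups_adj (y # xs)) = y" by simp
    then have "remdups_adj (x # remdups_adj (y # xs)) = x # remdups_adj (remdups_adj (y # xs))"
      using False R_cons_ne[of "remdups_adj (y # xs)" x] by simp
    then show ?thesis using e 3(2) False by simp
  qed
qed

lemma RappR: "remdups_adj (a @ b) = remdups_adj (a @ remdups_adj b)"
proof (induct a)
  case Nil
  have "remdups_adj (remdups_adj b) = remdups_adj b" by (rule rda_idem)
  then show ?case by simp
next
  case (Cons x a) then show ?case using RCons_eq[OF Cons.hyps, of x] by simp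
qed

lemma RappL: "remdups_adj (a @ b) = remdups_adj (remdups_adj a @ b)"
proof -
  have 1: "remdups_adj (rev b @ rev a) = remdups_adj (rev b @ remdups_adj (rev a))" by (rule RappR)
  have "rev (remdups_adj (a @ b)) = remdups_adj (rev b @ rev a)" by (metis remdups_adj_rev rev_append)
  also have "\<dots> = remdups_adj (rev b @ rev (remdups_adj a))" using 1 by simp
  also have "\<dots> = rev (remdups_adj (remdups_adj a @ b))" by (metis remdups_adj_rev rev_append)
  finally show ?thesis by simp
qed

lemma simple_app: "simple_letters (a @ b) = (simple_letters a - set b) \<union> (simple_letters b - set a)"
proof -
  have "\<And>x. x \<in> set b \<longleftrightarrow> count_list b x \<noteq> 0" "\<And>x. x \<in> set a \<longleftrightarrow> count_list a x \<noteq> 0"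
    by (simp_all add: count_list_0_iff)
  then show ?thesis unfolding simple_letters_def by auto
qed

lemma set_rda: "set a = set (remdups_adj a)" by simp

lemma g_cong: "gamma_rel a a' \<Longrightarrow> gamma_rel b b' \<Longrightarrow> gamma_rel (a @ b) (a' @ b')"
  unfolding GC
proof (elim conjE, intro conjI)
  assume h: "remdups_adj a = remdups_adj a'" "simple_letters a = simple_letters a'"
    "remdups_adj b = remdups_adj b'" "simple_letters b = simple_letters b'"
  show "remdups_adj (a @ b) = remdups_adj (a' @ b')"
    by (metis RappL RappR h(1) h(3))
  have "set a = set a'" "set b = set b'" using h(1,3) set_rda by metis+
  then show "simple_letters (a @ b) = simple_letters (a' @ b')" using h(2,4) simple_app by simp
qed


lemma RD: assumes "remdups_adj w = x # r"
  shows "\<exists>n w'. w = replicate (Suc n) x @ w' \<and> remdups_adj w' = r \<and> (w' = [] \<or> hd w' \<noteq> x)"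
proof -
  obtain n w' where w: "w = replicate n x @ w'" "w' = [] \<or> hd w' \<noteq> x" using splitRun[of w x] by blast
  have "w \<noteq> []" using assms by auto
  have "hd w = x" using assms hd_remdups_adj by (metis list.sel(1))
  have "n \<noteq> 0"
  proof
    assume "n = 0"
    then have "w = w'" using w by simp
    then show False using w(2) \<open>w \<noteq> []\<close> \<open>hd w = x\<close> by blast
  qed
  then obtain m where m: "n = Suc m" by (cases n) auto
  have "remdups_adj w = remdups_adj (x # w')" using w m RA[of m x w'] by simp
  also have "\<dots> = x # remdups_adj w'" using R_cons_ne[OF w(2)] .
  finally have "remdups_adj w = x # remdups_adj w'" .
  then show ?thesis using assms w m by auto
qed

definition w0 :: word where "w0 = [0,1,2,2,0]"

lemma simple_W: "i \<ge> 1 \<Longrightarrow> j \<ge> 2 \<Longrightarrow> k \<ge> 1 \<Longrightarrow> simple_letters (replicate i 0 @ 1 # replicate j 2 @ replicate k 0) = {1}"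
  unfolding simple_letters_def by auto

lemma rda_W0: "remdups_adj (replicate (Suc i) 0 @ 1 # replicate (Suc j) 2 @ replicate (Suc k) 0 :: word) = [0,1,2,0]"
proof -
  have a: "remdups_adj (replicate (Suc j) 2 @ replicate (Suc k) 0 :: word) = [2,0]"
  proof -
    have "remdups_adj (replicate (Suc j) 2 @ replicate (Suc k) 0 :: word) = remdups_adj (2 # replicate (Suc k) 0)" by (rule RA)
    also have "\<dots> = 2 # remdups_adj (replicate (Suc k) (0::nat))" by (rule R_cons_ne) simp
    also have "\<dots> = [2,0]" by (simp only: remdups_adj_replicate) simp
    finally show ?thesis .
  qed
  have b: "remdups_adj (1 # (replicate (Suc j) 2 @ replicate (Suc k) 0) :: word) = [1,2,0]"
  proof -
    have "remdups_adj (1 # (replicate (Suc j) 2 @ replicate (Suc k) 0) :: word) = 1 # remdups_adj (replicate (Suc j) 2 @ replicate (Suc k) 0)"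
      by (rule R_cons_ne) simp
    then show ?thesis using a by simp
  qed
  have "remdups_adj (replicate (Suc i) 0 @ 1 # replicate (Suc j) 2 @ replicate (Suc k) 0 :: word) =
        remdups_adj (0 # 1 # replicate (Suc j) 2 @ replicate (Suc k) 0)" by (rule RA)
  also have "\<dots> = 0 # remdups_adj (1 # replicate (Suc j) 2 @ replicate (Suc k) 0)" by (rule R_cons_ne) simp
  also have "\<dots> = [0,1,2,0]" using b by simp
  finally show ?thesis .
qed

lemma rda_W: "i \<ge> 1 \<Longrightarrow> j \<ge> 1 \<Longrightarrow> k \<ge> 1 \<Longrightarrow> remdups_adj (replicate i 0 @ 1 # replicate j 2 @ replicate k 0 :: word) = [0,1,2,0]"
  using rda_W0[of "i - 1" "j - 1" "k - 1"] by simp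

lemma w0_eq: "w0 = replicate 1 0 @ 1 # replicate 2 2 @ replicate 1 0"
  by (simp add: w0_def numeral_eq_Suc)

lemma rda_w0: "remdups_adj w0 = [0,1,2,0]" by (simp add: w0_def)

lemma simple_w0: "simple_letters w0 = {1}"
  unfolding w0_eq by (rule simple_W) auto

lemma isW_gamma: "isW w \<longleftrightarrow> gamma_rel w w0"
proof
  assume "isW w"
  then obtain i j k where ijk: "i \<ge> 1" "j \<ge> 2" "k \<ge> 1" "w = replicate i 0 @ 1 # replicate j 2 @ replicate k 0"
    unfolding isW_def by blast
  have "remdups_adj w = [0,1,2,0]" using rda_W[of i j k] ijk by simp
  moreover have "simple_letters w = {1}" using simple_W[of i j k] ijk by simp
  ultimately show "gamma_rel w w0" unfolding GC using rda_w0 simple_w0 by simp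
next
  assume "gamma_rel w w0"
  then have r: "remdups_adj w = [0,1,2,0]" and s: "simple_letters w = {1}"
    unfolding GC using rda_w0 simple_w0 by simp_all
  obtain i w1 where 1: "w = replicate (Suc i) 0 @ w1" "remdups_adj w1 = [1,2,0]" using RD[OF r] by blast
  obtain a w2 where 2: "w1 = replicate (Suc a) 1 @ w2" "remdups_adj w2 = [2,0]" using RD[OF 1(2)] by blast
  obtain j w3 where 3: "w2 = replicate (Suc j) 2 @ w3" "remdups_adj w3 = [0]" using RD[OF 2(2)] by blast
  obtain k w4 where 4: "w3 = replicate (Suc k) 0 @ w4" "remdups_adj w4 = []" using RD[OF 3(2)] by blast
  have w: "w = replicate (Suc i) 0 @ replicate (Suc a) 1 @ replicate (Suc j) 2 @ replicate (Suc k) 0"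
    using 1 2 3 4 by simp
  have "1 \<in> simple_letters w" using s by simp
  then have "count_list w 1 = 1" unfolding simple_letters_def by simp
  then have "a = 0" using w by simp
  have "2 \<notin> simple_letters w" using s by simp
  then have "count_list w 2 \<noteq> 1" unfolding simple_letters_def by simp
  then have "j \<ge> 1" using w by simp
  show "isW w" unfolding isW_def using w \<open>a = 0\<close> \<open>j \<ge> 1\<close>
    by (intro exI[of _ "Suc i"] exI[of _ "Suc j"] exI[of _ "Suc k"]) simp
qed



lemma take_rep_cons: "take (n + Suc t) (replicate n x @ y # R) = replicate n x @ y # take t R"
  by (simp add: take_append)

lemma factorW:
  fixes p a s :: word
  assumes e: "p @ a @ s = replicate i 0 @ 1 # replicate j 2 @ replicate k 0"
  shows "(\<exists>\<alpha> \<beta> \<gamma>. a = replicate \<alpha> 0 @ 1 # replicate \<beta> 2 @ replicate \<gamma> 0 \<and> (\<gamma> > 0 \<longrightarrow> \<beta> = j))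
         \<or> (\<exists>\<beta> \<gamma>. a = replicate \<beta> 2 @ replicate \<gamma> 0)"
proof -
  let ?R = "replicate j 2 @ replicate k (0::nat)"
  let ?W = "replicate i 0 @ 1 # ?R"
  define m where "m = length p"
  define l where "l = length a"
  have "drop m (p @ a @ s) = a @ s" by (simp add: m_def)
  then have "drop m ?W = a @ s" using e by simp
  then have "take l (drop m ?W) = a" by (simp add: l_def)
  then have a: "a = take l (drop m ?W)" by (rule sym)
  have tR: "take t ?R = replicate (min t j) 2 @ replicate (min (t - j) k) 0" for t
    by (simp add: take_append)
  have dR: "drop t ?R = replicate (j - t) 2 @ replicate (k - (t - j)) 0" for t
    by (simp add: drop_append)
  show ?thesis
  proof (cases "m \<le> i")
    case True
    then have d: "drop m ?W = replicate (i - m) 0 @ 1 # ?R" by (simp add: drop_append)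
    show ?thesis
    proof (cases "l \<le> i - m")
      case True
      then have "a = replicate l 0" using a d by (simp add: take_append min_def)
      then have "a = replicate 0 2 @ replicate l 0" by simp
      then show ?thesis by (intro disjI2 exI[of _ 0] exI[of _ l])
    next
      case False
      define t where "t = l - (i - m) - 1"
      have t: "l = (i - m) + Suc t" using False by (simp add: t_def)
      have a': "a = take l (replicate (i - m) 0 @ 1 # ?R)" using a d by (simp only:)
      have "a = replicate (i - m) 0 @ 1 # take t ?R" unfolding a' t take_rep_cons ..
      then have A: "a = replicate (i - m) 0 @ 1 # replicate (min t j) 2 @ replicate (min (t - j) k) 0"
        using tR by simp
      have c: "min (t - j) k > 0 \<longrightarrow> min t j = j" by (simp add: min_def)
      show ?thesis
        apply (rule disjI1)
        apply (rule exI[where x="i - m"])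
        apply (rule exI[where x="min t j"])
        apply (rule exI[where x="min (t - j) k"])
        using A c by (rule conjI)
    qed
  next
    case False
    define d where "d = m - i - 1"
    have md: "m - i = Suc d" using False by (simp add: d_def)
    have "drop m ?W = drop (m - i) (1 # ?R)" using False by (simp add: drop_append)
    then have d: "drop m ?W = drop d ?R" using md by (simp only: drop_Suc_Cons)
    have a': "a = take l (drop d ?R)" using a d by (simp only:)
    have A: "a = replicate (min l (j - d)) 2 @ replicate (min (l - (j - d)) (k - (d - j))) 0"
      unfolding a' dR by (simp add: take_append)
    show ?thesis
      apply (rule disjI2)
      apply (rule exI[where x="min l (j - d)"])
      apply (rule exI[where x="min (l - (j - d)) (k - (d - j))"])
      by (rule A)
  qed
qed

definition good :: "word \<Rightarrow> bool" where "good a \<longleftrightarrow> (\<exists>p s. isW (p @ a @ s))"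

lemma same_simple: "(\<And>z. min (count_list u z) 2 = min (count_list v z) 2) \<Longrightarrow> simple_letters u = simple_letters v"
  unfolding simple_letters_def
proof -
  assume h: "\<And>z. min (count_list u z) 2 = min (count_list v z) 2"
  have "count_list u z = 1 \<longleftrightarrow> count_list v z = 1" for z using h[of z] by (auto simp: min_def split: if_splits)
  then show "{x. count_list u x = 1} = {x. count_list v x = 1}" by simp
qed

lemma R_app_ne: "remdups_adj (replicate n x @ w) = (if n = 0 then remdups_adj w else remdups_adj (x # w))"
  using RA[of "n - 1" x w] by (cases n) auto

lemma rda_012: "remdups_adj (replicate \<alpha> 0 @ 1 # replicate \<beta> 2 @ replicate \<gamma> 0 :: word) =
   (if \<alpha> = 0 then [] else [0]) @ [1] @ (if \<beta> = 0 then [] else [2]) @ (if \<gamma> = 0 then [] else [0])"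
proof -
  have c: "remdups_adj (replicate \<gamma> 0 :: word) = (if \<gamma> = 0 then [] else [0])" by (simp add: remdups_adj_replicate)
  have b: "remdups_adj (replicate \<beta> 2 @ replicate \<gamma> 0 :: word) = (if \<beta> = 0 then [] else [2]) @ (if \<gamma> = 0 then [] else [0])"
  proof (cases "\<beta> = 0")
    case True then show ?thesis using c by simp
  next
    case False
    then have "remdups_adj (replicate \<beta> 2 @ replicate \<gamma> 0 :: word) = remdups_adj (2 # replicate \<gamma> 0)" by (simp add: R_app_ne)
    also have "\<dots> = 2 # remdups_adj (replicate \<gamma> (0::nat))" by (rule R_cons_ne) (cases \<gamma>, auto)
    finally show ?thesis using c False by simp
  qed
  have "remdups_adj (1 # replicate \<beta> 2 @ replicate \<gamma> 0 :: word) = 1 # remdups_adj (replicate \<beta> 2 @ replicate \<gamma> 0)"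
    by (rule R_cons_ne) (cases \<beta>; cases \<gamma>; auto)
  then have a: "remdups_adj (1 # replicate \<beta> 2 @ replicate \<gamma> 0 :: word) = 1 # (if \<beta> = 0 then [] else [2]) @ (if \<gamma> = 0 then [] else [0])"
    using b by simp
  show ?thesis
  proof (cases "\<alpha> = 0")
    case True then show ?thesis using a by simp
  next
    case False
    then have "remdups_adj (replicate \<alpha> 0 @ 1 # replicate \<beta> 2 @ replicate \<gamma> 0 :: word) = remdups_adj (0 # 1 # replicate \<beta> 2 @ replicate \<gamma> 0)"
      by (simp add: R_app_ne)
    also have "\<dots> = 0 # remdups_adj (1 # replicate \<beta> 2 @ replicate \<gamma> (0::nat))" by (rule R_cons_ne) simp
    finally show ?thesis using a False by simp
  qed
qed

lemma rda_20: "remdups_adj (replicate \<beta> 2 @ replicate \<gamma> 0 :: word) = (if \<beta> = 0 then [] else [2]) @ (if \<gamma> = 0 then [] else [0])"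
proof (cases "\<beta> = 0")
  case True then show ?thesis by (simp add: remdups_adj_replicate)
next
  case False
  then have "remdups_adj (replicate \<beta> 2 @ replicate \<gamma> 0 :: word) = remdups_adj (2 # replicate \<gamma> 0)" by (simp add: R_app_ne)
  also have "\<dots> = 2 # remdups_adj (replicate \<gamma> (0::nat))" by (rule R_cons_ne) (cases \<gamma>, auto)
  finally show ?thesis using False by (simp add: remdups_adj_replicate)
qed

lemma isW_unfold: "isW w \<Longrightarrow> \<exists>i j k. i \<ge> 1 \<and> j \<ge> 2 \<and> k \<ge> 1 \<and> w = replicate i 0 @ 1 # replicate j 2 @ replicate k 0"
  unfolding isW_def by blast



context eqth begin

lemma Core: assumes H: "a \<approx> b" and g: "good a" and ng: "\<not> gamma_rel a b" shows tgt
proof (rule ccontr)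
  assume nt: "\<not> tgt"
  have cnt: "min (count_list a z) 2 = min (count_list b z) 2" for z
  proof (rule ccontr)
    assume "\<not> ?thesis"
    moreover have "replicate (count_list a z) z \<approx> replicate (count_list b z) z"
      using sub[OF H, of "\<lambda>c. if c = z then [z] else []"] unfolding proj1 .
    ultimately show False using Mult0 nt by blast
  qed
  have sl: "simple_letters a = simple_letters b" by (rule same_simple) (rule cnt)
  have MLx: False if "[0,1,2,2,0] \<approx> Q" "\<not> isW Q" for Q using MainL that nt by blast
  obtain p s where "isW (p @ a @ s)" using g good_def by blast
  then obtain i j k where ijk: "i \<ge> 1" "j \<ge> 2" "k \<ge> 1" "p @ a @ s = replicate i 0 @ 1 # replicate j 2 @ replicate k 0"
    using isW_unfold by blast
  have c0: "min (count_list a 0) 2 = min (count_list b 0) 2" by (rule cnt)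
  have c1: "min (count_list a 1) 2 = min (count_list b 1) 2" by (rule cnt)
  have c2: "min (count_list a 2) 2 = min (count_list b 2) 2" by (rule cnt)
  have gw: "[0,1,2,2,0] \<approx> q" if "isW p'" "p' \<approx> q" for p' q
    using trn[OF sym[OF WN[OF that(1)]] that(2)] .
  from factorW[OF ijk(4)] show False
  proof (elim disjE exE conjE)
    fix \<beta> \<gamma> assume a: "a = replicate \<beta> 2 @ replicate \<gamma> 0"
    have "isW ([0,1,2,2] @ a @ [0])" unfolding isW_def a
      by (rule exI[where x=1], rule exI[where x="\<beta> + 2"], rule exI[where x="Suc \<gamma>"]) (simp add: replicate_add[symmetric] numeral_eq_Suc replicate_append_same)
    then have hw: "[0,1,2,2,0] \<approx> [0,1,2,2] @ b @ [0]" using gw ctx[OF H] by blast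
    show False
    proof (cases "isW ([0,1,2,2] @ b @ [0])")
      case False then show False using MLx hw by blast
    next
      case True
      then obtain i' j' k' where W': "[0,1,2,2] @ b @ [0] = replicate i' 0 @ 1 # replicate j' 2 @ replicate k' 0"
        using isW_unfold by blast
      from factorW[OF W'] show False
      proof (elim disjE exE conjE)
        fix \<alpha>' \<beta>' \<gamma>' assume b: "b = replicate \<alpha>' 0 @ 1 # replicate \<beta>' 2 @ replicate \<gamma>' 0"
        show False using c1 a b by simp
      next
        fix \<beta>' \<gamma>' assume b: "b = replicate \<beta>' 2 @ replicate \<gamma>' 0"
        have "\<beta> = 0 \<longleftrightarrow> \<beta>' = 0" using c2 a b by (simp add: min_def split: if_splits)
        moreover have "\<gamma> = 0 \<longleftrightarrow> \<gamma>' = 0" using c0 a b by (simp add: min_def split: if_splits)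
        ultimately have "remdups_adj a = remdups_adj b" unfolding a b rda_20 by simp
        then have "gamma_rel a b" using sl GC by blast
        then show False using ng by simp
      qed
    qed
  next
    fix \<alpha> \<beta> \<gamma> assume a: "a = replicate \<alpha> 0 @ 1 # replicate \<beta> 2 @ replicate \<gamma> 0" and bj: "\<gamma> > 0 \<longrightarrow> \<beta> = j"
    have cb1: "count_list b 1 = 1" using c1 a by (simp add: min_def split: if_splits)
    show False
    proof (cases "\<gamma> = 0")
      case True
      have "isW ([0] @ a @ [2,2,0])" unfolding isW_def a
        by (rule exI[where x="Suc \<alpha>"], rule exI[where x="\<beta> + 2"], rule exI[where x="1"]) (simp add: True replicate_add[symmetric] numeral_eq_Suc replicate_append_same replicate_app_Cons_same)
      then have hw: "[0,1,2,2,0] \<approx> [0] @ b @ [2,2,0]" using gw ctx[OF H] by blast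
      show False
      proof (cases "isW ([0] @ b @ [2,2,0])")
        case False then show False using MLx hw by blast
      next
        case True
        then obtain i' j' k' where W': "[0] @ b @ [2,2,0] = replicate i' 0 @ 1 # replicate j' 2 @ replicate k' 0"
          using isW_unfold by blast
        from factorW[OF W'] show False
        proof (elim disjE exE conjE)
          fix \<beta>' \<gamma>' assume b: "b = replicate \<beta>' 2 @ replicate \<gamma>' 0"
          show False using cb1 b by simp
        next
          fix \<alpha>' \<beta>' \<gamma>' assume b: "b = replicate \<alpha>' 0 @ 1 # replicate \<beta>' 2 @ replicate \<gamma>' 0" and bj': "\<gamma>' > 0 \<longrightarrow> \<beta>' = j'"
          have "count_list ([0] @ b @ [2,2,0]) 2 = j'" unfolding W' by simp
          then have "\<beta>' + 2 = j'" using b by simp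
          then have "\<gamma>' = 0" using bj' by auto
          have "\<alpha> = 0 \<longleftrightarrow> \<alpha>' = 0" using c0 a b \<open>\<gamma> = 0\<close> \<open>\<gamma>' = 0\<close> by (simp add: min_def split: if_splits)
          moreover have "\<beta> = 0 \<longleftrightarrow> \<beta>' = 0" using c2 a b by (simp add: min_def split: if_splits)
          ultimately have "remdups_adj a = remdups_adj b" unfolding a b rda_012 using \<open>\<gamma> = 0\<close> \<open>\<gamma>' = 0\<close> by simp
          then have "gamma_rel a b" using sl GC by blast
          then show False using ng by simp
        qed
      qed
    next
      case False
      then have "\<beta> = j" using bj by simp
      have "isW ([0] @ a)" unfolding isW_def a
        by (rule exI[where x="Suc \<alpha>"], rule exI[where x="\<beta>"], rule exI[where x="\<gamma>"]) (use False \<open>\<beta> = j\<close> ijk in simp)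
      then have hw: "[0,1,2,2,0] \<approx> [0] @ b" using gw ctxL[OF H] by blast
      show False
      proof (cases "isW ([0] @ b)")
        case False then show False using MLx hw by blast
      next
        case True
        then obtain i' j' k' where W': "[0] @ b @ [] = replicate i' 0 @ 1 # replicate j' 2 @ replicate k' 0" and k': "k' \<ge> 1"
          using isW_unfold by fastforce
        from factorW[OF W'] show False
        proof (elim disjE exE conjE)
          fix \<beta>' \<gamma>' assume b: "b = replicate \<beta>' 2 @ replicate \<gamma>' 0"
          show False using cb1 b by simp
        next
          fix \<alpha>' \<beta>' \<gamma>' assume b: "b = replicate \<alpha>' 0 @ 1 # replicate \<beta>' 2 @ replicate \<gamma>' 0"
          have "last ([0] @ b @ []) = 0" unfolding W' using k' by (cases k') auto
          have "\<gamma>' \<noteq> 0"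
          proof
            assume "\<gamma>' = 0"
            then have "last ([0] @ b @ []) \<noteq> 0" using b by (cases \<beta>') (auto simp: last_append)
            then show False using \<open>last ([0] @ b @ []) = 0\<close> by simp
          qed
          show False
          proof (cases "\<alpha> = 0 \<longleftrightarrow> \<alpha>' = 0")
            case True
            moreover have "\<beta> = 0 \<longleftrightarrow> \<beta>' = 0" using c2 a b by (simp add: min_def split: if_splits)
            ultimately have "remdups_adj a = remdups_adj b" unfolding a b rda_012 using \<open>\<gamma> \<noteq> 0\<close> \<open>\<gamma>' \<noteq> 0\<close> by simp
            then have "gamma_rel a b" using sl GC by blast
            then show False using ng by simp
          next
            case pat: False
            let ?s = "\<lambda>c::nat. if c = 1 then [1] else if c = 0 then [0] else []"
            have "subst_word ?s a \<approx> subst_word ?s b" using sub[OF H] .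
            then have "replicate \<alpha> 0 @ 1 # replicate \<gamma> 0 \<approx> replicate \<alpha>' 0 @ 1 # replicate \<gamma>' 0"
              unfolding a b by simp
            moreover have "min (\<alpha> + \<gamma>) 2 = min (\<alpha>' + \<gamma>') 2" using c0 a b by simp
            ultimately have tgt using L2 pat \<open>\<gamma> \<noteq> 0\<close> \<open>\<gamma>' \<noteq> 0\<close> by blast
            then show False using nt by simp
          qed
        qed
      qed
    qed
  qed
qed

end


lemma gclass_eq: "gclass a = gclass b \<longleftrightarrow> gamma_rel a b"
proof
  assume "gclass a = gclass b"
  moreover have "a \<in> gclass a" unfolding gclass_def by (simp add: g_refl)
  ultimately have "a \<in> gclass b" by simp
  then show "gamma_rel a b" unfolding gclass_def by simp
next
  assume h: "gamma_rel a b"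
  show "gclass a = gclass b" unfolding gclass_def
    using h g_sym g_trans by blast
qed

lemma some_gclass: "gamma_rel (SOME x. x \<in> gclass a) a"
proof -
  have "a \<in> gclass a" unfolding gclass_def by (simp add: g_refl)
  then have "(SOME x. x \<in> gclass a) \<in> gclass a" by (rule someI)
  then show ?thesis unfolding gclass_def by simp
qed

lemma cmult_gclass: "cmult (gclass a) (gclass b) = gclass (a @ b)"
  unfolding cmult_def gclass_eq by (rule g_cong[OF some_gclass some_gclass])

lemma good_iff: "good a \<longleftrightarrow> (\<exists>p s. gamma_rel (p @ a @ s) w0)"
  unfolding good_def isW_gamma ..

lemma cle_iff: "cle (gclass a) (gclass w0) \<longleftrightarrow> good a"
proof
  assume "cle (gclass a) (gclass w0)"
  then obtain p s where "gclass w0 = cmult (cmult (gclass p) (gclass a)) (gclass s)"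
    unfolding cle_def gclasses_def by blast
  then have "gclass w0 = gclass (p @ a @ s)" by (simp add: cmult_gclass)
  then have "gamma_rel (p @ a @ s) w0" using gclass_eq g_sym by metis
  then show "good a" unfolding good_iff by blast
next
  assume "good a"
  then obtain p s where "gamma_rel (p @ a @ s) w0" unfolding good_iff by blast
  then have "gclass w0 = cmult (cmult (gclass p) (gclass a)) (gclass s)"
    by (simp add: cmult_gclass gclass_eq g_sym)
  then show "cle (gclass a) (gclass w0)" unfolding cle_def gclasses_def by blast
qed

lemma good_nil: "good []"
proof -
  have "isW ([] @ [] @ w0)" unfolding isW_def w0_def
    by (rule exI[where x=1], rule exI[where x=2], rule exI[where x=1]) (simp add: numeral_eq_Suc)
  then show ?thesis unfolding good_def by blast
qed

lemma good_suffix: "good (x @ y) \<Longrightarrow> good y"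
  unfolding good_def by (metis append.assoc)

lemma good_set: "good a \<Longrightarrow> set a \<subseteq> {0,1,2}"
proof -
  assume "good a"
  then obtain p s where "isW (p @ a @ s)" unfolding good_def by blast
  then obtain i j k where "p @ a @ s = replicate i 0 @ 1 # replicate j 2 @ replicate k 0" using isW_unfold by blast
  then have "set (p @ a @ s) \<subseteq> {0,1,2}" by (auto simp: set_replicate_conv_if)
  then show ?thesis by auto
qed

lemma good_gamma: "good a \<Longrightarrow> gamma_rel a b \<Longrightarrow> good b"
  using cle_iff gclass_eq by metis

abbreviation MM where "MM \<equiv> M_gamma {gclass w0}"

definition sig :: "(nat \<Rightarrow> word set option) \<Rightarrow> nat \<Rightarrow> word" where
  "sig \<phi> z = (case \<phi> z of None \<Rightarrow> [3] | Some c \<Rightarrow> (SOME x. x \<in> c))"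

lemma carrier_some: "Some c \<in> carrier MM \<Longrightarrow> gclass (SOME x. x \<in> c) = c"
proof -
  assume "Some c \<in> carrier MM"
  then have "c \<in> gclasses" unfolding M_gamma_def by auto
  then obtain r where r: "c = gclass r" unfolding gclasses_def by blast
  show ?thesis unfolding r gclass_eq by (rule some_gclass)
qed

lemma EV: assumes "range \<phi> \<subseteq> carrier MM"
  shows "eval_word MM \<phi> w = (if good (subst_word (sig \<phi>) w) then Some (gclass (subst_word (sig \<phi>) w)) else None)"
proof (induct w)
  case Nil
  show ?case using good_nil unfolding eval_word_def by (simp add: M_gamma_def)
next
  case (Cons z w)
  let ?sw = "subst_word (sig \<phi>) w"
  have ev: "eval_word MM \<phi> (z # w) = mult MM (\<phi> z) (eval_word MM \<phi> w)"
    unfolding eval_word_def by simp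
  show ?case
  proof (cases "\<phi> z")
    case None
    then have "sig \<phi> z = [3]" by (simp add: sig_def)
    then have "\<not> good (subst_word (sig \<phi>) (z # w))" using good_set by fastforce
    then show ?thesis using ev None by (simp add: M_gamma_def)
  next
    case (Some c)
    then have "Some c \<in> carrier MM" using assms by (metis range_subsetD)
    then have gc: "gclass (sig \<phi> z) = c" using carrier_some Some by (simp add: sig_def)
    show ?thesis
    proof (cases "good ?sw")
      case False
      then have "\<not> good (subst_word (sig \<phi>) (z # w))" using good_suffix by auto
      then show ?thesis using ev Some Cons False by (simp add: M_gamma_def)
    next
      case True
      have cm: "cmult c (gclass ?sw) = gclass (sig \<phi> z @ ?sw)" using gc cmult_gclass by metis
      show ?thesis using ev Some Cons True by (simp add: M_gamma_def cm cle_iff)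
    qed
  qed
qed



theorem lemma4p2:
  fixes T :: "(word \<times> word) set"
  assumes "equational_theory T"
    and "([0,1,0], [0,1,0,0]) \<in> T"
    and "([0,1,0], [0,0,1,0]) \<in> T"
    and "([0,1,0,1], [1,0,1,0]) \<in> T"
    and "\<not> in_variety (M_gamma {gclass [0,1,2,2,0]}) T"
  shows "([0,1,2,2,0], [0,1,0,2,2,0]) \<in> T"
proof (rule ccontr)
  assume nt: "([0,1,2,2,0], [0,1,0,2,2,0]) \<notin> T"
  interpret eqth T using assms(1-4) by unfold_locales
  have key: "(if good a then Some (gclass a) else None) = (if good b then Some (gclass b) else None)"
    if ab: "a \<approx> b" for a b
  proof (cases "good a")
    case True
    have "gamma_rel a b" using Core[OF ab True] nt by blast
    then show ?thesis using True good_gamma gclass_eq by auto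
  next
    case False
    show ?thesis
    proof (cases "good b")
      case True
      have "gamma_rel b a" using Core[OF sym[OF ab] True] nt by blast
      then show ?thesis using True False good_gamma by blast
    qed (simp add: False)
  qed
  have "in_variety MM T" unfolding in_variety_def sat_id_def
  proof (intro ballI allI impI)
    fix uv and \<phi> :: "nat \<Rightarrow> word set option" assume uv: "uv \<in> T" and ph: "range \<phi> \<subseteq> carrier MM"
    obtain u v where e: "uv = (u, v)" by (cases uv)
    have "subst_word (sig \<phi>) u \<approx> subst_word (sig \<phi>) v" using sub uv e by blast
    then have K: "(if good (subst_word (sig \<phi>) u) then Some (gclass (subst_word (sig \<phi>) u)) else None) =
               (if good (subst_word (sig \<phi>) v) then Some (gclass (subst_word (sig \<phi>) v)) else None)"
      by (rule key)
    show "eval_word MM \<phi> (fst uv) = eval_word MM \<phi> (snd uv)"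
      unfolding e fst_conv snd_conv EV[OF ph] by (rule K)
  qed
  then show False using assms(5) by (simp add: w0_def)
qed


end
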